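(* Let $n\geq 0$ and $r\geq 0$ be integers and let $k\in\mathbf{Z}$. Then \begin{align*} \tilde{A}_{n}^{(r,k)}(x)=\sum_{j=0}^{n}\Bigg\{\sum_{l=0}^{n-j}\sum_{a=0}^{n-j-l}\binom{n}{l+j}\binom{n-j-l}{a}S_{1}(l+j,j)\,B_{a}^{(a-r+1)}(1-r)\,\tilde{C}_{n-j-l-a}^{(k)}\Bigg\}x^{j}. \end{align*}
   Context: For $k\in\mathbf{Z}$, $Lif_{k}(x)=\sum_{m=0}^{\infty}\frac{x^{m}}{m!(m+1)^{k}}$. For integers $r\geq 0$, $k\in\mathbf{Z}$, the polynomials $\tilde{A}_{n}^{(r,k)}(x)$ are defined by \[\left(\frac{t}{(1+t)\log(1+t)}\right)^{r}Lif_{k}\left(-\log(1+t)\right)(1+t)^{x}=\sum_{n=0}^{\infty}\tilde{A}_{n}^{(r,k)}(x)\frac{t^{n}}{n!}.\] The poly-Cauchy numbers of the second kind $\tilde{C}_{n}^{(k)}$ are defined by $Lif_{k}\left(-\log(1+t)\right)=\sum_{n=0}^{\infty}\tilde{C}_{n}^{(k)}\frac{t^{n}}{n!}$. For an integer $\alpha$ (possibly negative), the Bernoulli polynomials of order $\alpha$ are defined by $\left(\frac{t}{e^{t}-1}\right)^{\alpha}e^{xt}=\sum_{n=0}^{\infty}B_{n}^{(\alpha)}(x)\frac{t^{n}}{n!}$. $S_{1}(n,m)$ denotes the signed Stirling numbers of the first kind, defined by $x(x-1)\cdots(x-n+1)=\sum_{m=0}^{n}S_{1}(n,m)x^{m}$.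 *)

theory Defs
  imports "HOL-Computational_Algebra.Formal_Power_Series" "HOL-Computational_Algebra.Polynomial"
begin

definition log1p_fps :: "real fps" where
  "log1p_fps = Abs_fps (\<lambda>n. if n = 0 then 0 else (-1) ^ (n + 1) / of_nat n)"

definition Lif_fps :: "int \<Rightarrow> real fps" where
  "Lif_fps k = Abs_fps (\<lambda>m. 1 / (fact m * (of_nat m + 1) powi k))"

definition Lif_neglog :: "int \<Rightarrow> real fps" where
  "Lif_neglog k = Lif_fps k oo (- log1p_fps)"

definition polyCauchy2 :: "nat \<Rightarrow> int \<Rightarrow> real" where
  "polyCauchy2 n k = fact n * fps_nth (Lif_neglog k) n"

(* t / ((1+t) log(1+t)) ; note log(1+t)/t = fps_shift 1 log1p_fps has constant term 1 *)
definition A_factor :: "real fps" where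
  "A_factor = inverse ((1 + fps_X) * fps_shift 1 log1p_fps)"

definition A_tilde :: "nat \<Rightarrow> nat \<Rightarrow> int \<Rightarrow> real \<Rightarrow> real" where
  "A_tilde n r k x = fact n * fps_nth (A_factor ^ r * Lif_neglog k * fps_binomial x) n"

definition expm1_div_fps :: "real fps" where
  "expm1_div_fps = Abs_fps (\<lambda>n. 1 / fact (n + 1))"

(* (t/(e^t-1))^alpha for integer alpha *)
definition bern_gen_pow :: "int \<Rightarrow> real fps" where
  "bern_gen_pow \<alpha> = (if \<alpha> \<ge> 0 then inverse expm1_div_fps ^ nat \<alpha>
                      else expm1_div_fps ^ nat (- \<alpha>))"

definition bernoulli_order :: "nat \<Rightarrow> int \<Rightarrow> real \<Rightarrow> real" where
  "bernoulli_order n \<alpha> x = fact n * fps_nth (bern_gen_pow \<alpha> * fps_exp x) n"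

definition stirling1_signed :: "nat \<Rightarrow> nat \<Rightarrow> int" where
  "stirling1_signed n m = coeff (\<Prod>i<n. [:- of_nat i, 1:]) m"

end

theory Submission imports Defs begin

unbundle fps_syntax

definition "psi = fps_shift 1 log1p_fps"

lemma L_ln: "log1p_fps = fps_ln 1"
  unfolding log1p_fps_def fps_ln_def
  apply (intro fps_ext)
  subgoal for n by (cases n) auto
  done

lemma L0[simp]: "log1p_fps $ 0 = 0" by (simp add: log1p_fps_def)
lemma psi0[simp]: "psi $ 0 = 1" by (simp add: log1p_fps_def psi_def)

lemma L_eq: "log1p_fps = fps_X * psi"
  by (intro fps_ext) (auto simp: log1p_fps_def psi_def)

lemma L_deriv: "fps_deriv log1p_fps = inverse (1 + fps_X)"
  by (simp add: L_ln fps_ln_deriv)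

lemma exp_comp_L: "fps_exp c oo log1p_fps = fps_binomial (c::real)"
proof -
  let ?g = "fps_exp c oo log1p_fps"
  have "fps_deriv ?g = (fps_const c * fps_exp c oo log1p_fps) * inverse (1 + fps_X)"
    by (simp add: fps_compose_deriv L_deriv)
  also have "\<dots> = fps_const c * ?g / (1 + fps_X)"
    by (simp add: fps_compose_mult_distrib fps_divide_unit)
  finally have "fps_deriv ?g = fps_const c * ?g / (1 + fps_X)" .
  moreover have "?g $ 0 = 1" by simp
  ultimately show ?thesis using fps_binomial_ODE_unique' by blast
qed

lemma E_comp_L: "expm1_div_fps oo log1p_fps = inverse psi"
proof -
  have XE: "fps_X * expm1_div_fps = fps_exp 1 - 1"
    apply (intro fps_ext)
    subgoal for n by (cases n) (auto simp: expm1_div_fps_def algebra_simps)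
    done
  have "(fps_X * expm1_div_fps) oo log1p_fps = fps_X"
    unfolding XE by (simp add: fps_compose_sub_distrib exp_comp_L fps_binomial_1)
  hence "log1p_fps * (expm1_div_fps oo log1p_fps) = fps_X"
    by (simp add: fps_compose_mult_distrib)
  hence "fps_X * (psi * (expm1_div_fps oo log1p_fps)) = fps_X * 1"
    by (metis L_eq mult.assoc mult_1_right)
  hence "psi * (expm1_div_fps oo log1p_fps) = 1"
    by (metis fps_X_neq_zero mult_cancel_left)
  thus ?thesis
    by (metis fps_inverse_unique mult.commute)
qed


lemma psi_inv: "inverse psi * psi = 1" "psi * inverse psi = 1"
  by (simp_all add: inverse_mult_eq_1 inverse_mult_eq_1')

lemma psi_pow_inv: "psi ^ k * inverse psi ^ k = 1"
  by (metis power_mult_distrib psi_inv(2) power_one)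

lemma key:
  "(inverse psi ^ (m+1) * inverse (1 + fps_X)) $ m = (if m = 0 then 1 else (0::real))"
proof (cases "m = 0")
  case True thus ?thesis by simp
next
  case False
  define f where "f = inverse psi ^ m"
  have d1: "inverse (1 + fps_X) = psi + fps_X * fps_deriv psi"
    using L_deriv L_eq by (metis fps_deriv_mult fps_deriv_fps_X mult_1 mult.commute)
  have dinv: "fps_deriv (inverse psi) = - fps_deriv psi * (inverse psi)^2"
    by (simp add: fps_inverse_deriv)
  have df: "fps_deriv f = - (fps_const (of_nat m) * fps_deriv psi * inverse psi ^ (m+1))"
  proof -
    have "fps_deriv f = fps_const (of_nat m) * (- fps_deriv psi * (inverse psi)^2) * inverse psi ^ (m - 1)"
      unfolding f_def fps_deriv_power dinv by simp
    also have "(inverse psi)^2 * inverse psi ^ (m - 1) = inverse psi ^ (m+1)"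
      using False by (simp add: power_add[symmetric])
    ultimately show ?thesis by (simp add: algebra_simps)
  qed
  have eq: "fps_const (of_nat m) * (inverse psi ^ (m+1) * inverse (1 + fps_X)) = fps_const (of_nat m) * f - fps_X * fps_deriv f"
  proof -
    have "inverse psi ^ (m+1) * psi = f"
      unfolding f_def by (simp add: mult.assoc psi_inv)
    then show ?thesis unfolding d1 df by (simp add: algebra_simps)
  qed
  have "(fps_const (of_nat m) * (inverse psi ^ (m+1) * inverse (1 + fps_X))) $ m = 0"
    unfolding eq using False by (cases m) simp_all
  thus ?thesis using False by simp
qed


lemma Lpow_nth: "(log1p_fps ^ i) $ j = (if j < i then 0 else (psi ^ i) $ (j - i))"
  by (simp add: L_eq power_mult_distrib fps_X_power_mult_nth)

lemma comp_coeff: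
  "((P oo log1p_fps) * W) $ a = (\<Sum>i=0..a. P $ i * (log1p_fps ^ i * W) $ a)"
proof -
  have c: "(P oo log1p_fps) $ j = (\<Sum>i=0..a. P $ i * (log1p_fps ^ i) $ j)" if "j \<le> a" for j
  proof -
    have "(P oo log1p_fps) $ j = (\<Sum>i=0..j. P $ i * (log1p_fps ^ i) $ j)"
      by (simp add: fps_compose_nth)
    also have "\<dots> = (\<Sum>i=0..a. P $ i * (log1p_fps ^ i) $ j)"
      using that by (intro sum.mono_neutral_left) (auto simp: Lpow_nth)
    finally show ?thesis .
  qed
  have "((P oo log1p_fps) * W) $ a = (\<Sum>j=0..a. (P oo log1p_fps) $ j * W $ (a - j))"
    by (simp add: fps_mult_nth)
  also have "\<dots> = (\<Sum>j=0..a. \<Sum>i=0..a. P $ i * (log1p_fps ^ i) $ j * W $ (a - j))"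
    by (intro sum.cong refl) (simp add: c sum_distrib_right)
  also have "\<dots> = (\<Sum>i=0..a. \<Sum>j=0..a. P $ i * ((log1p_fps ^ i) $ j * W $ (a - j)))"
    by (subst sum.swap) (simp add: mult.assoc)
  also have "\<dots> = (\<Sum>i=0..a. P $ i * (log1p_fps ^ i * W) $ a)"
    by (simp add: fps_mult_nth sum_distrib_left)
  finally show ?thesis .
qed

lemma Lpow_W:
  assumes "i \<le> a"
  shows "(log1p_fps ^ i * (inverse psi ^ (a+1) * inverse (1 + fps_X))) $ a = (if i = a then 1 else 0)"
proof -
  have "psi ^ i * inverse psi ^ (a+1) = inverse psi ^ (a - i + 1)"
  proof -
    have "inverse psi ^ (a+1) = inverse psi ^ i * inverse psi ^ (a - i + 1)"
      using assms by (simp add: power_add[symmetric])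
    thus ?thesis by (simp add: mult.assoc[symmetric] psi_pow_inv)
  qed
  note h = this
  have "log1p_fps ^ i * (inverse psi ^ (a+1) * inverse (1 + fps_X))
        = fps_X ^ i * ((psi ^ i * inverse psi ^ (a+1)) * inverse (1 + fps_X))"
    by (simp only: L_eq power_mult_distrib mult.assoc)
  also have "\<dots> = fps_X ^ i * (inverse psi ^ (a - i + 1) * inverse (1 + fps_X))"
    by (simp only: h)
  finally have e: "log1p_fps ^ i * (inverse psi ^ (a+1) * inverse (1 + fps_X))
        = fps_X ^ i * (inverse psi ^ (a - i + 1) * inverse (1 + fps_X))" .
  have na: "\<not> a < i" using assms by simp
  have "(log1p_fps ^ i * (inverse psi ^ (a+1) * inverse (1 + fps_X))) $ a
      = (inverse psi ^ (a - i + 1) * inverse (1 + fps_X)) $ (a - i)"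
    by (simp only: e fps_X_power_mult_nth if_not_P[OF na])
  also have "\<dots> = (if i = a then 1 else 0)"
    using key[of "a - i"] assms by auto
  finally show ?thesis .
qed

lemma bern_comp:
  "(bern_gen_pow (int a - int r + 1) oo log1p_fps) * inverse psi ^ (a+1) = inverse psi ^ r"
proof (cases "r \<le> a + 1")
  case True
  have E0: "expm1_div_fps $ 0 \<noteq> 0" by (simp add: expm1_div_fps_def)
  have "inverse expm1_div_fps oo log1p_fps = psi"
    by (simp add: fps_inverse_compose[OF L0 E0] E_comp_L)
  hence "bern_gen_pow (int a - int r + 1) oo log1p_fps = psi ^ (a + 1 - r)"
  proof -
    have "nat (int a - int r + 1) = a + 1 - r" using True by simp
    thus ?thesis using True \<open>inverse expm1_div_fps oo log1p_fps = psi\<close>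
      by (simp add: bern_gen_pow_def fps_compose_power[symmetric])
  qed
  moreover have "inverse psi ^ (a+1) = inverse psi ^ (a + 1 - r) * inverse psi ^ r"
    using True by (simp add: power_add[symmetric])
  ultimately show ?thesis by (simp add: mult.assoc[symmetric] psi_pow_inv)
next
  case False
  have "bern_gen_pow (int a - int r + 1) oo log1p_fps = inverse psi ^ (r - (a + 1))"
  proof -
    have "nat (- (int a - int r + 1)) = r - (a + 1)" using False by simp
    thus ?thesis using False
      by (simp add: bern_gen_pow_def fps_compose_power[symmetric] E_comp_L)
  qed
  moreover have "inverse psi ^ (r - (a+1)) * inverse psi ^ (a+1) = inverse psi ^ r"
    using False by (subst power_add[symmetric]) simp
  ultimately show ?thesis by (simp only:)
qed

lemma bernoulli_A:
  "(A_factor ^ r) $ a = (bern_gen_pow (int a - int r + 1) * fps_exp (1 - real r)) $ a"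
proof -
  define P where "P = bern_gen_pow (int a - int r + 1) * fps_exp (1 - real r)"
  define W where "W = inverse psi ^ (a+1) * inverse (1 + fps_X :: real fps)"
  have bin: "fps_binomial (1 - real r) = (1 + fps_X) * inverse (1 + fps_X) ^ r"
  proof -
    have "fps_binomial (1 - real r) = fps_binomial 1 * fps_binomial (of_nat r * (- 1))"
      by (simp flip: fps_binomial_add_mult)
    moreover have "inverse (1 + fps_X) ^ r = fps_binomial (of_nat r * (- 1) :: real)"
      by (simp add: fps_binomial_minus_one[symmetric] fps_binomial_power)
    ultimately show ?thesis by (simp add: fps_binomial_1)
  qed
  have X1: "(1 + fps_X) * inverse (1 + fps_X :: real fps) = 1"
    by (simp add: inverse_mult_eq_1')
  have "(P oo log1p_fps) * W = ((bern_gen_pow (int a - int r + 1) oo log1p_fps) * inverse psi ^ (a+1))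
        * ((1 + fps_X) * inverse (1 + fps_X)) * inverse (1 + fps_X) ^ r"
    by (simp add: P_def W_def fps_compose_mult_distrib exp_comp_L bin algebra_simps)
  also have "\<dots> = inverse psi ^ r * inverse (1 + fps_X) ^ r"
    by (simp only: bern_comp X1 mult_1_right)
  also have "\<dots> = A_factor ^ r"
  proof -
    have "A_factor = inverse psi * inverse (1 + fps_X)"
      unfolding A_factor_def psi_def[symmetric] by (simp add: fps_inverse_mult mult.commute)
    thus ?thesis by (metis power_mult_distrib)
  qed
  finally have AP: "A_factor ^ r = (P oo log1p_fps) * W" ..
  have "(A_factor ^ r) $ a = (\<Sum>i=0..a. P $ i * (if i = a then 1 else 0))"
    unfolding AP comp_coeff W_def by (intro sum.cong refl, subst Lpow_W) auto
  also have "\<dots> = P $ a" by (simp add: if_distrib sum.delta' cong: if_cong)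
  finally show ?thesis by (simp add: P_def)
qed

definition evp :: "nat \<Rightarrow> int poly \<Rightarrow> real \<Rightarrow> real" where
  "evp N p x = (\<Sum>j<N. of_int (coeff p j) * x ^ j)"

lemma evp_step:
  assumes "degree p < N"
  shows "evp (Suc N) (p * [:c, 1:]) x = evp N p x * (x + of_int c)"
proof -
  have pc: "p * [:c, 1:] = smult c p + pCons 0 p" by simp
  have cN: "coeff p N = 0" using assms by (simp add: coeff_eq_0)
  have A: "(\<Sum>j<Suc N. of_int (coeff p j) * x ^ j) = evp N p x"
    using cN by (simp add: evp_def)
  have B: "(\<Sum>j<Suc N. of_int (coeff (pCons 0 p) j) * x ^ j) = x * evp N p x"
    by (subst sum.lessThan_Suc_shift) (simp add: evp_def sum_distrib_left mult_ac)
  have "evp (Suc N) (p * [:c, 1:]) x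
      = of_int c * (\<Sum>j<Suc N. of_int (coeff p j) * x ^ j) + (\<Sum>j<Suc N. of_int (coeff (pCons 0 p) j) * x ^ j)"
    unfolding evp_def pc by (simp add: sum.distrib sum_distrib_left algebra_simps)
  also have "\<dots> = evp N p x * (x + of_int c)" unfolding A B by (simp add: algebra_simps)
  finally show ?thesis .
qed

lemma deg_S: "degree (\<Prod>i<m. [:- int i, 1:]) \<le> m"
proof (induction m)
  case (Suc m)
  have "degree ((\<Prod>i<m. [:- int i, 1:]) * [:- int m, 1:]) \<le> degree (\<Prod>i<m. [:- int i, 1:]) + 1"
    using degree_mult_le[of "\<Prod>i<m. [:- int i, 1:]" "[:- int m, 1:]"] by simp
  thus ?case using Suc by simp
qed simp

lemma evp_S: "evp (Suc m) (\<Prod>i<m. [:- int i, 1:]) x = (\<Prod>i<m. x - of_nat i)"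
proof (induction m)
  case 0 thus ?case by (simp add: evp_def)
next
  case (Suc m)
  have "degree (\<Prod>i<m. [:- int i, 1:]) < Suc m" using deg_S[of m] by simp
  from evp_step[OF this, of "- int m" x] Suc show ?case by simp
qed

lemma stirling_sum:
  "(\<Sum>j=0..m. real_of_int (stirling1_signed m j) * x ^ j) = fact m * (x gchoose m)"
proof -
  have "(\<Sum>j=0..m. real_of_int (stirling1_signed m j) * x ^ j) = evp (Suc m) (\<Prod>i<m. [:- int i, 1:]) x"
    by (simp add: evp_def stirling1_signed_def atLeast0AtMost lessThan_Suc_atMost)
  also have "\<dots> = (\<Prod>i<m. x - of_nat i)" by (rule evp_S)
  also have "\<dots> = fact m * (x gchoose m)"
    by (simp add: gbinomial_mult_fact atLeast0LessThan)
  finally show ?thesis .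
qed


lemma triangle_swap:
  "(\<Sum>j=0..n. \<Sum>m=j..n. G j m) = (\<Sum>m=0..(n::nat). \<Sum>j=0..m. (G j m :: real))"
proof -
  have e1: "sum (G j) {j..n} = (\<Sum>m=0..n. if j \<le> m then G j m else 0)" for j
  proof -
    have "{j..n} = {m\<in>{0..n}. j \<le> m}" by auto
    thus ?thesis by (simp only: sum.inter_filter[OF finite_atLeastAtMost])
  qed
  have e2: "(\<Sum>j=0..m. G j m) = (\<Sum>j=0..n. if j \<le> m then G j m else 0)" if "m \<le> n" for m
  proof -
    have "{0..m} = {j\<in>{0..n}. j \<le> m}" using that by auto
    thus ?thesis by (simp only: sum.inter_filter[OF finite_atLeastAtMost])
  qed
  have "(\<Sum>j=0..n. \<Sum>m=j..n. G j m) = (\<Sum>j=0..n. \<Sum>m=0..n. if j \<le> m then G j m else 0)"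
    by (simp only: e1)
  also have "\<dots> = (\<Sum>m=0..n. \<Sum>j=0..n. if j \<le> m then G j m else 0)" by (rule sum.swap)
  also have "\<dots> = (\<Sum>m=0..n. \<Sum>j=0..m. G j m)"
    by (rule sum.cong[OF refl]) (simp add: e2)
  finally show ?thesis .
qed

theorem theorem3:
  fixes n r :: nat and k :: int and x :: real
  shows "A_tilde n r k x =
    (\<Sum>j=0..n. (\<Sum>l=0..n-j. \<Sum>a=0..n-j-l.
        real (n choose (l + j)) * real ((n - j - l) choose a)
        * of_int (stirling1_signed (l + j) j)
        * bernoulli_order a (int a - int r + 1) (1 - real r)
        * polyCauchy2 (n - j - l - a) k) * x ^ j)"
proof -
  define \<alpha> where "\<alpha> a = (A_factor ^ r) $ a" for a
  define \<gamma> where "\<gamma> c = Lif_neglog k $ c" for c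
  define b where "b m = x gchoose m" for m
  have bern: "bernoulli_order a (int a - int r + 1) (1 - real r) = fact a * \<alpha> a" for a
    by (simp add: bernoulli_order_def \<alpha>_def bernoulli_A)
  have pc: "polyCauchy2 c k = fact c * \<gamma> c" for c
    by (simp add: polyCauchy2_def \<gamma>_def)
  define T where "T m = (\<Sum>a=0..n-m. fact n * b m * \<alpha> a * \<gamma> (n - m - a))" for m
  have LHS: "A_tilde n r k x = (\<Sum>m=0..n. T m)"
  proof -
    have "(A_factor ^ r * Lif_neglog k * fps_binomial x) $ n
        = (fps_binomial x * (A_factor ^ r * Lif_neglog k)) $ n" by (simp add: mult.commute)
    also have "\<dots> = (\<Sum>m=0..n. b m * (\<Sum>a=0..n-m. \<alpha> a * \<gamma> (n - m - a)))"
      by (simp add: fps_mult_nth b_def \<alpha>_def \<gamma>_def)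
    finally show ?thesis
      by (simp add: A_tilde_def T_def sum_distrib_left mult_ac)
  qed
  have RHS_inner: "(\<Sum>j=0..m. \<Sum>a=0..n-m.
        real (n choose m) * real ((n - m) choose a)
        * of_int (stirling1_signed m j)
        * bernoulli_order a (int a - int r + 1) (1 - real r)
        * polyCauchy2 (n - m - a) k * x ^ j) = T m" if "m \<le> n" for m
  proof -
    have "(\<Sum>j=0..m. \<Sum>a=0..n-m.
        real (n choose m) * real ((n - m) choose a)
        * of_int (stirling1_signed m j)
        * bernoulli_order a (int a - int r + 1) (1 - real r)
        * polyCauchy2 (n - m - a) k * x ^ j)
      = (\<Sum>a=0..n-m. real (n choose m) * real ((n - m) choose a)
        * bernoulli_order a (int a - int r + 1) (1 - real r)
        * polyCauchy2 (n - m - a) k * (\<Sum>j=0..m. of_int (stirling1_signed m j) * x ^ j))"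
      by (subst sum.swap) (simp add: sum_distrib_left mult_ac)
    also have "\<dots> = (\<Sum>a=0..n-m. real (n choose m) * real ((n - m) choose a)
        * (fact a * \<alpha> a) * (fact (n - m - a) * \<gamma> (n - m - a)) * (fact m * b m))"
      by (simp add: stirling_sum bern pc b_def)
    also have "\<dots> = T m"
      unfolding T_def
    proof (intro sum.cong refl)
      fix a assume "a \<in> {0..n-m}"
      hence a: "a \<le> n - m" by simp
      have F: "real (n choose m) * real ((n - m) choose a) * fact a * fact (n - m - a) * fact m = fact n"
      proof -
        have b1: "fact m * fact (n-m) * real (n choose m) = (fact n::real)"
        proof -
          have "real (fact m * fact (n-m) * (n choose m)) = real (fact n)"
            using binomial_fact_lemma[OF that] by (rule arg_cong)
          thus ?thesis by (simp only: of_nat_mult of_nat_fact)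
        qed
        have b2: "fact a * fact (n-m-a) * real ((n-m) choose a) = (fact (n-m)::real)"
        proof -
          have "real (fact a * fact (n-m-a) * ((n-m) choose a)) = real (fact (n-m))"
            using binomial_fact_lemma[OF a] by (rule arg_cong)
          thus ?thesis by (simp only: of_nat_mult of_nat_fact)
        qed
        have "real (n choose m) * real ((n - m) choose a) * fact a * fact (n - m - a) * fact m
            = (fact a * fact (n-m-a) * real ((n-m) choose a)) * fact m * real (n choose m)"
          by (simp only: mult_ac)
        also have "\<dots> = fact (n-m) * fact m * real (n choose m)" by (simp only: b2)
        also have "\<dots> = fact m * fact (n-m) * real (n choose m)" by (simp only: mult.commute[of "fact (n-m) :: real" "fact m"])
        also have "\<dots> = fact n" by (rule b1)
        finally show ?thesis .
      qed
      thus "real (n choose m) * real ((n - m) choose a) * (fact a * \<alpha> a) *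
          (fact (n - m - a) * \<gamma> (n - m - a)) * (fact m * b m)
          = fact n * b m * \<alpha> a * \<gamma> (n - m - a)"
      proof -
        have "real (n choose m) * real ((n - m) choose a) * (fact a * \<alpha> a) *
          (fact (n - m - a) * \<gamma> (n - m - a)) * (fact m * b m)
          = (real (n choose m) * real ((n - m) choose a) * fact a * fact (n - m - a) * fact m)
            * (b m * \<alpha> a * \<gamma> (n - m - a))"
          by (simp only: mult_ac)
        also have "\<dots> = fact n * (b m * \<alpha> a * \<gamma> (n - m - a))" by (simp only: F)
        finally show ?thesis by (simp only: mult_ac)
      qed
    qed
    finally show ?thesis .
  qed
  have "(\<Sum>j=0..n. (\<Sum>l=0..n-j. \<Sum>a=0..n-j-l.
        real (n choose (l + j)) * real ((n - j - l) choose a)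
        * of_int (stirling1_signed (l + j) j)
        * bernoulli_order a (int a - int r + 1) (1 - real r)
        * polyCauchy2 (n - j - l - a) k) * x ^ j)
     = (\<Sum>j=0..n. \<Sum>m=j..n. \<Sum>a=0..n-m.
        real (n choose m) * real ((n - m) choose a)
        * of_int (stirling1_signed m j)
        * bernoulli_order a (int a - int r + 1) (1 - real r)
        * polyCauchy2 (n - m - a) k * x ^ j)"
  proof (intro sum.cong refl)
    fix j assume "j \<in> {0..n}"
    hence j: "j \<le> n" by simp
    let ?g = "\<lambda>m. \<Sum>a=0..n-m.
        real (n choose m) * real ((n - m) choose a)
        * of_int (stirling1_signed m j)
        * bernoulli_order a (int a - int r + 1) (1 - real r)
        * polyCauchy2 (n - m - a) k * x ^ j"
    have "(\<Sum>l=0..n-j. \<Sum>a=0..n-j-l.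
        real (n choose (l + j)) * real ((n - j - l) choose a)
        * of_int (stirling1_signed (l + j) j)
        * bernoulli_order a (int a - int r + 1) (1 - real r)
        * polyCauchy2 (n - j - l - a) k) * x ^ j = (\<Sum>l=0..n-j. ?g (l + j))"
      by (simp add: sum_distrib_right diff_diff_left add.commute)
    also have "\<dots> = sum ?g {0+j..n-j+j}"
      by (rule sum.shift_bounds_cl_nat_ivl[symmetric])
    also have "\<dots> = sum ?g {j..n}" using j by simp
    finally show "(\<Sum>l=0..n-j. \<Sum>a=0..n-j-l.
        real (n choose (l + j)) * real ((n - j - l) choose a)
        * of_int (stirling1_signed (l + j) j)
        * bernoulli_order a (int a - int r + 1) (1 - real r)
        * polyCauchy2 (n - j - l - a) k) * x ^ j = sum ?g {j..n}" .
  qed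
  also have "\<dots> = (\<Sum>m=0..n. \<Sum>j=0..m. \<Sum>a=0..n-m.
        real (n choose m) * real ((n - m) choose a)
        * of_int (stirling1_signed m j)
        * bernoulli_order a (int a - int r + 1) (1 - real r)
        * polyCauchy2 (n - m - a) k * x ^ j)"
    by (rule triangle_swap)
  also have "\<dots> = (\<Sum>m=0..n. T m)"
    by (rule sum.cong[OF refl], rule RHS_inner) simp
  finally show ?thesis using LHS by simp
qed

end
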